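(* For all $n\geq 1$, \[a_{2(2)}(n)=b_2(n)+b_2(n+1)-b_2(n+2).\]
   Context: For $\ell\ge 2$, an $\ell$-regular partition is a partition with no part divisible by $\ell$, and $b_\ell(n)$ is the number of $\ell$-regular partitions of $n$. $a_{m(\ell)}(n)$ is the number of $\ell$-regular partitions of $n$ in which the smallest part occurs at least $m$ times; here $\ell=2$, $m=2$. *)

theory Defs
  imports Main "HOL-Library.Multiset"
begin

definition partitions :: "nat \<Rightarrow> nat multiset set" where
  "partitions n = {P. (\<forall>x\<in>#P. 0 < x) \<and> sum_mset P = n}"

definition regular_partitions :: "nat \<Rightarrow> nat \<Rightarrow> nat multiset set" where
  "regular_partitions l n = {P \<in> partitions n. \<forall>x\<in>#P. \<not> l dvd x}"

definition b :: "nat \<Rightarrow> nat \<Rightarrow> nat" where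
  "b l n = card (regular_partitions l n)"

definition a :: "nat \<Rightarrow> nat \<Rightarrow> nat \<Rightarrow> nat" where
  "a m l n = card {P \<in> regular_partitions l n. P \<noteq> {#} \<and> count P (Min_mset P) \<ge> m}"

end

theory Submission
  imports Defs
begin

lemma size_le_sum: "(\<forall>x\<in>#P. 0 < x) \<Longrightarrow> size P \<le> sum_mset (P::nat multiset)"
  by (induction P) auto

lemma mem_le_sum: "x \<in># (P::nat multiset) \<Longrightarrow> x \<le> sum_mset P"
  by (metis le_add1 multi_member_split sum_mset.add_mset)

lemma fin_part: "finite (partitions n)"
proof -
  have "partitions n \<subseteq> (\<Union>k\<le>n. multisets_of_size {1..n} k)"
  proof
    fix P assume "P \<in> partitions n"
    hence h: "\<forall>x\<in>#P. 0 < x" "sum_mset P = n" by (auto simp: partitions_def)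
    have "size P \<le> n" using size_le_sum[OF h(1)] h(2) by simp
    moreover have "set_mset P \<subseteq> {1..n}" using h mem_le_sum by fastforce
    ultimately show "P \<in> (\<Union>k\<le>n. multisets_of_size {1..n} k)"
      by (auto simp: multisets_of_size_def)
  qed
  thus ?thesis by (rule finite_subset) auto
qed

lemma fin_reg: "finite (regular_partitions l n)"
  using fin_part[of n] unfolding regular_partitions_def by auto

lemma reg2: "P \<in> regular_partitions 2 n \<longleftrightarrow> (\<forall>x\<in>#P. odd x) \<and> sum_mset P = n"
  unfolding regular_partitions_def partitions_def by (auto intro: odd_pos)

lemma card_split: "finite A \<Longrightarrow> card A = card {x\<in>A. Q x} + card {x\<in>A. \<not> Q x}"
proof -
  assume f: "finite A"
  have "A = {x\<in>A. Q x} \<union> {x\<in>A. \<not> Q x}" by auto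
  hence "card A = card ({x\<in>A. Q x} \<union> {x\<in>A. \<not> Q x})" by simp
  also have "\<dots> = card {x\<in>A. Q x} + card {x\<in>A. \<not> Q x}"
    by (rule card_Un_disjoint) (use f in auto)
  finally show ?thesis .
qed

abbreviation O2 where "O2 m \<equiv> regular_partitions 2 m"

lemma step1: "b 2 (m+1) = b 2 m + card {P \<in> O2 (m+1). 1 \<notin># P}"
proof -
  have "card (O2 (m+1)) = card {P \<in> O2 (m+1). 1 \<in># P} + card {P \<in> O2 (m+1). 1 \<notin># P}"
    by (rule card_split[OF fin_reg])
  moreover have "{P \<in> O2 (m+1). 1 \<in># P} = add_mset 1 ` O2 m"
  proof
    show "{P \<in> O2 (m+1). 1 \<in># P} \<subseteq> add_mset 1 ` O2 m"
    proof
      fix P assume "P \<in> {P \<in> O2 (m+1). 1 \<in># P}"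
      hence h: "\<forall>x\<in>#P. odd x" "sum_mset P = m+1" "1 \<in># P" by (auto simp: reg2)
      then obtain Q where Q: "P = add_mset 1 Q" by (metis multi_member_split)
      hence "Q \<in> O2 m" using h by (auto simp: reg2)
      thus "P \<in> add_mset 1 ` O2 m" using Q by auto
    qed
  qed (auto simp: reg2)
  moreover have "card (add_mset 1 ` O2 m) = card (O2 m)"
    by (rule card_image) (auto simp: inj_on_def)
  ultimately show ?thesis unfolding b_def by simp
qed

lemma step3: "n \<ge> 1 \<Longrightarrow> b 2 n = a 2 2 n + card {P \<in> O2 n. P \<noteq> {#} \<and> count P (Min_mset P) = 1}"
proof -
  assume n: "n \<ge> 1"
  have "b 2 n = card {P \<in> O2 n. P \<noteq> {#} \<and> count P (Min_mset P) \<ge> 2}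
     + card {P \<in> O2 n. \<not> (P \<noteq> {#} \<and> count P (Min_mset P) \<ge> 2)}"
    unfolding b_def by (rule card_split[OF fin_reg])
  moreover have "{P \<in> O2 n. \<not> (P \<noteq> {#} \<and> count P (Min_mset P) \<ge> 2)}
       = {P \<in> O2 n. P \<noteq> {#} \<and> count P (Min_mset P) = 1}"
  proof -
    { fix P assume "P \<in> O2 n"
      hence "P \<noteq> {#}" using n by (auto simp: reg2)
      hence "0 < count P (Min_mset P)" by (meson Min_in_mset count_greater_zero_iff)
      hence "count P (Min_mset P) \<ge> 1" by linarith
      hence "(\<not> count P (Min_mset P) \<ge> 2) = (count P (Min_mset P) = 1)"
        by arith
      hence "P \<noteq> {#} \<and> (\<not> count P (Min_mset P) \<ge> 2 \<longleftrightarrow> count P (Min_mset P) = 1)"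
        using \<open>P \<noteq> {#}\<close> by blast }
    thus ?thesis by blast
  qed
  ultimately show ?thesis unfolding a_def by simp
qed

definition f :: "nat multiset \<Rightarrow> nat multiset" where
  "f P = add_mset (Min_mset P + 2) (P - {#Min_mset P#})"
definition g :: "nat multiset \<Rightarrow> nat multiset" where
  "g P = add_mset (Min_mset P - 2) (P - {#Min_mset P#})"

lemma step2: "card {P \<in> O2 n. P \<noteq> {#} \<and> count P (Min_mset P) = 1} = card {P \<in> O2 (n+2). 1 \<notin># P}"
proof (rule bij_betw_same_card[of f], rule bij_betw_byWitness[where f'=g])
  let ?C = "{P \<in> O2 n. P \<noteq> {#} \<and> count P (Min_mset P) = 1}"
  let ?D = "{P \<in> O2 (n+2). 1 \<notin># P}"
  have fC: "f P \<in> ?D \<and> g (f P) = P" if "P \<in> ?C" for P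
  proof -
    from that have h: "\<forall>x\<in>#P. odd x" "sum_mset P = n" "P \<noteq> {#}" "count P (Min_mset P) = 1"
      by (auto simp: reg2)
    define m where "m = Min_mset P"
    have mP: "m \<in># P" using h(3) m_def by simp
    then obtain R where R: "P = add_mset m R" by (metis multi_member_split)
    have c1: "count P m = 1" using h(4) unfolding m_def .
    have "count R m = 0" using c1 R by simp
    hence "m \<notin># R" by (simp add: not_in_iff)
    have ge: "x \<ge> m" if "x \<in># P" for x using that m_def by simp
    have Rg: "x \<ge> m + 2" "odd x" if "x \<in># R" for x
    proof -
      have "x \<in># P" "x \<noteq> m" using that R \<open>m \<notin># R\<close> by auto
      moreover have "odd m" "odd x" using h(1) mP \<open>x \<in># P\<close> by auto
      ultimately show "x \<ge> m + 2" "odd x" using ge[of x] by presburger+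
    qed
    have fP: "f P = add_mset (m+2) R" unfolding f_def m_def[symmetric] using R by simp
    have Mf: "Min_mset (f P) = m + 2" unfolding fP
      by (rule Min_eqI) (use Rg in auto)
    have "g (f P) = P" unfolding g_def Mf using fP R by simp
    moreover have "f P \<in> ?D"
    proof -
      have "odd m" using h(1) mP by auto
      hence "m + 2 \<noteq> 1" by auto
      moreover have "1 \<notin># R" using Rg by force
      moreover have "\<forall>x\<in>#f P. odd x" using Rg \<open>odd m\<close> fP by auto
      moreover have "sum_mset (f P) = n + 2" using fP R h(2) by simp
      ultimately show ?thesis using fP by (auto simp: reg2)
    qed
    ultimately show ?thesis by simp
  qed
  have gD: "g Q \<in> ?C \<and> f (g Q) = Q" if "Q \<in> ?D" for Q
  proof -
    from that have h: "\<forall>x\<in>#Q. odd x" "sum_mset Q = n+2" "1 \<notin># Q"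
      by (auto simp: reg2)
    hence "Q \<noteq> {#}" by auto
    define m where "m = Min_mset Q"
    have mQ: "m \<in># Q" using \<open>Q \<noteq> {#}\<close> m_def by simp
    then obtain R where R: "Q = add_mset m R" by (metis multi_member_split)
    have ge: "x \<ge> m" if "x \<in># Q" for x using that m_def by simp
    have "odd m" "m \<noteq> 1" using h(1) h(3) mQ by auto
    hence m3: "m \<ge> 3" by presburger
    have Rg: "x \<ge> m" "odd x" if "x \<in># R" for x
      using that R ge h(1) by auto
    have gQ: "g Q = add_mset (m-2) R" unfolding g_def m_def[symmetric] using R by simp
    have Mg: "Min_mset (g Q) = m - 2" unfolding gQ
      by (rule Min_eqI) (auto dest!: Rg(1))
    have "f (g Q) = Q" unfolding f_def Mg using gQ R m3 by simp
    moreover have "g Q \<in> ?C"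
    proof -
      have "odd m" using h(1) mQ by auto
      hence "odd (m - 2)" using m3 by presburger
      moreover have "m - 2 \<notin># R" using Rg m3 by force
      moreover have "sum_mset (g Q) = n" using gQ R h(2) m3 by simp
      moreover have "count (g Q) (Min_mset (g Q)) = 1"
      proof -
        have "count (g Q) (m - 2) = 1" unfolding gQ
          using \<open>m - 2 \<notin># R\<close> by (simp add: not_in_iff)
        thus ?thesis by (simp only: Mg)
      qed
      moreover have "\<forall>x\<in>#g Q. odd x" using gQ Rg \<open>odd (m - 2)\<close> by auto
      moreover have "g Q \<noteq> {#}" using gQ by simp
      ultimately have "g Q \<in> O2 n \<and> g Q \<noteq> {#} \<and> count (g Q) (Min_mset (g Q)) = 1"
        by (simp only: reg2) blast
      thus ?thesis by blast
    qed
    ultimately show ?thesis by simp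
  qed
  show "\<forall>a\<in>?C. g (f a) = a" by (rule ballI) (rule conjunct2[OF fC])
  show "\<forall>a\<in>?D. f (g a) = a" by (rule ballI) (rule conjunct2[OF gD])
  show "f ` ?C \<subseteq> ?D" by (rule image_subsetI) (rule conjunct1[OF fC])
  show "g ` ?D \<subseteq> ?C" by (rule image_subsetI) (rule conjunct1[OF gD])
qed

theorem theorem5p4:
  fixes n :: nat
  assumes "n \<ge> 1"
  shows "int (a 2 2 n) = int (b 2 n) + int (b 2 (n + 1)) - int (b 2 (n + 2))"
  using step1[of "n+1"] step2[of n] step3[OF assms] by simp

end
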